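(* Each of the following third-order recursions is periodic with period $12$: $$z_n = \frac{-1 - 2 z_{n-3} + 2 z_{n-2} - 2 z_{n-1}}{2 z_{n-3}},$$ $$z_n = \frac{(1+\sqrt3\, i) z_{n-3} + 2 z_{n-2} + (1-\sqrt3\, i) z_{n-1} + (-1-\sqrt3\, i)}{2 z_{n-3}},$$ $$z_n = \frac{(1-\sqrt3\, i) z_{n-3} + 2 z_{n-2} + (1+\sqrt3\, i) z_{n-1} + (-1+\sqrt3\, i)}{2 z_{n-3}}.$$ That is, for the sequence defined from indeterminates $z_1,z_2,z_3$ one has $z_{13}=z_1$, $z_{14}=z_2$, $z_{15}=z_3$ in $\mathbb{C}(z_1,z_2,z_3)$, hence $z_{n+12}=z_n$ for all $n\ge1$.
   Context: Let $z_1,z_2,z_3$ be independent indeterminates over $\mathbb{C}$ and define $z_n\in\mathbb{C}(z_1,z_2,z_3)$ for $n\ge4$ by the given recursion. A third-order recursion is periodic with period $k$ if all iterates are well-defined elements of $\mathbb{C}(z_1,z_2,z_3)$ (no denominator identically zero) and $z_{k+1}=z_1$, $z_{k+2}=z_2$, $z_{k+3}=z_3$; equivalently every complex sequence satisfying the recursion with no vanishing denominator satisfies $z_{n+k}=z_n$ for all $n$. *)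

theory Defs
  imports Complex_Main
begin

text \<open>A third-order recursion z_n = N(z_{n-3},z_{n-2},z_{n-1}) / D(z_{n-3},z_{n-2},z_{n-1}),
  sequences indexed from 1 (z 1, z 2, z 3 are the initial values).\<close>

definition rec3_solution ::
  "(complex \<Rightarrow> complex \<Rightarrow> complex \<Rightarrow> complex) \<Rightarrow>
   (complex \<Rightarrow> complex \<Rightarrow> complex \<Rightarrow> complex) \<Rightarrow> (nat \<Rightarrow> complex) \<Rightarrow> bool" where
  "rec3_solution N D z \<longleftrightarrow>
     (\<forall>n\<ge>4. D (z (n-3)) (z (n-2)) (z (n-1)) \<noteq> 0 \<and>
             z n = N (z (n-3)) (z (n-2)) (z (n-1)) / D (z (n-3)) (z (n-2)) (z (n-1)))"

text \<open>Periodicity with period k: all iterates are well defined as rational functions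
  (equivalently, some complex solution with no vanishing denominator exists, since the
  denominators are then nonzero rational functions and vice versa), and every such
  complex solution satisfies z (n+k) = z n for all n >= 1.\<close>

definition rec3_periodic ::
  "(complex \<Rightarrow> complex \<Rightarrow> complex \<Rightarrow> complex) \<Rightarrow>
   (complex \<Rightarrow> complex \<Rightarrow> complex \<Rightarrow> complex) \<Rightarrow> nat \<Rightarrow> bool" where
  "rec3_periodic N D k \<longleftrightarrow>
     (\<exists>z. rec3_solution N D z) \<and>
     (\<forall>z. rec3_solution N D z \<longrightarrow> (\<forall>n\<ge>1. z (n + k) = z n))"

end

theory Submission
  imports Defs
begin
definition Pa4 :: "complex \<Rightarrow> complex \<Rightarrow> complex \<Rightarrow> complex" where "Pa4 a b c = (-2)*a + 2*b + (-2)*c + (-1)"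
definition Pa5 :: "complex \<Rightarrow> complex \<Rightarrow> complex \<Rightarrow> complex" where "Pa5 a b c = (-2)*a*b + 2*a*c + 1*a + (-2)*b + 2*c + 1"
definition Pa6 :: "complex \<Rightarrow> complex \<Rightarrow> complex \<Rightarrow> complex" where "Pa6 a b c = (-2)*a*b*c + (-1)*a*b + (-2)*a*c + (-1)*a + 2*b^2 + (-2)*b*c + 1*b + (-2)*c + (-1)"
definition Pa7 :: "complex \<Rightarrow> complex \<Rightarrow> complex \<Rightarrow> complex" where "Pa7 a b c = 1*a*b*c + 1*a*b + 2*a*c^2 + 3*a*c + 1*a + (-2)*b^2*c + (-2)*b^2 + 2*b*c^2 + 1*b*c + (-1)*b + 2*c^2 + 3*c + 1"
definition Pa8 :: "complex \<Rightarrow> complex \<Rightarrow> complex \<Rightarrow> complex" where "Pa8 a b c = 2*a*b^2*c + (-2)*a*b^2 + (-6)*a*b*c^2 + (-5)*a*b*c + (-1)*a*b + 4*a*c^3 + 8*a*c^2 + 5*a*c + 1*a + 4*b^3 + (-4)*b^2*c + (-4)*b*c^2 + (-8)*b*c + (-3)*b + 4*c^3 + 8*c^2 + 5*c + 1"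
definition Pa9 :: "complex \<Rightarrow> complex \<Rightarrow> complex \<Rightarrow> complex" where "Pa9 a b c = (-8)*a^3*b*c^2 + (-4)*a^3*b*c + 8*a^3*c^3 + 8*a^3*c^2 + 2*a^3*c + 4*a^2*b^2*c^2 + 14*a^2*b^2*c + 2*a^2*b^2 + (-4)*a^2*b*c^3 + (-24)*a^2*b*c^2 + (-9)*a^2*b*c + 1*a^2*b + 8*a^2*c^3 + 4*a^2*c^2 + (-2)*a^2*c + (-1)*a^2 + (-12)*a*b^3*c + (-8)*a*b^3 + 24*a*b^2*c^2 + 20*a*b^2*c + (-12)*a*b*c^3 + (-4)*a*b*c^2 + 13*a*b*c + 6*a*b + (-8)*a*c^3 + (-16)*a*c^2 + (-10)*a*c + (-2)*a + 8*b^4 + (-24)*b^3*c + (-4)*b^3 + 24*b^2*c^2 + (-6)*b^2 + (-8)*b*c^3 + 12*b*c^2 + 18*b*c + 5*b + (-8)*c^3 + (-12)*c^2 + (-6)*c + (-1)"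
definition Pa10 :: "complex \<Rightarrow> complex \<Rightarrow> complex \<Rightarrow> complex" where "Pa10 a b c = (-8)*a^3*b^3*c + (-4)*a^3*b^3 + (-16)*a^3*b^2*c^2 + (-20)*a^3*b^2*c + (-6)*a^3*b^2 + 8*a^3*b*c^3 + 8*a^3*b*c^2 + 2*a^3*b*c + 16*a^3*c^4 + 40*a^3*c^3 + 36*a^3*c^2 + 14*a^3*c + 2*a^3 + 24*a^2*b^4*c + 20*a^2*b^4 + (-12)*a^2*b^3*c^2 + 22*a^2*b^3*c + 18*a^2*b^3 + (-36)*a^2*b^2*c^3 + (-116)*a^2*b^2*c^2 + (-85)*a^2*b^2*c + (-18)*a^2*b^2 + 24*a^2*b*c^4 + 20*a^2*b*c^3 + (-38)*a^2*b*c^2 + (-41)*a^2*b*c + (-10)*a^2*b + 48*a^2*c^4 + 120*a^2*c^3 + 108*a^2*c^2 + 42*a^2*c + 6*a^2 + (-16)*a*b^5*c + (-32)*a*b^5 + 40*a*b^4*c^2 + 56*a*b^4*c + (-8)*a*b^4 + (-32)*a*b^3*c^3 + 40*a*b^3*c^2 + 132*a*b^3*c + 48*a*b^3 + 8*a*b^2*c^4 + (-112)*a*b^2*c^3 + (-190)*a*b^2*c^2 + (-70)*a*b^2*c + (-2)*a*b^2 + 48*a*b*c^4 + 16*a*b*c^3 + (-100)*a*b*c^2 + (-88)*a*b*c + (-20)*a*b + 48*a*c^4 + 120*a*c^3 + 108*a*c^2 + 42*a*c + 6*a + 16*b^6 + (-56)*b^5*c + (-8)*b^5 + 72*b^4*c^2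 + (-12)*b^4*c + (-28)*b^4 + (-40)*b^3*c^3 + 72*b^3*c^2 + 98*b^3*c + 18*b^3 + 8*b^2*c^4 + (-76)*b^2*c^3 + (-90)*b^2*c^2 + (-5)*b^2*c + 10*b^2 + 24*b*c^4 + 4*b*c^3 + (-54)*b*c^2 + (-45)*b*c + (-10)*b + 16*c^4 + 40*c^3 + 36*c^2 + 14*c + 2"
definition Pa11 :: "complex \<Rightarrow> complex \<Rightarrow> complex \<Rightarrow> complex" where "Pa11 a b c = 4*a^3*b*c^2 + 2*a^3*b*c + 8*a^3*c^3 + 8*a^3*c^2 + 2*a^3*c + (-8)*a^2*b^2*c^2 + (-4)*a^2*b^2*c + 2*a^2*b^2 + 8*a^2*b*c^3 + 6*a^2*b*c^2 + 9*a^2*b*c + 4*a^2*b + 20*a^2*c^3 + 28*a^2*c^2 + 13*a^2*c + 2*a^2 + (-8)*a*b^3 + (-12)*a*b^2*c^2 + (-16)*a*b^2*c + (-12)*a*b^2 + 12*a*b*c^3 + 14*a*b*c^2 + 4*a*b*c + 16*a*c^3 + 32*a*c^2 + 20*a*c + 4*a + 8*b^4 + (-12)*b^3*c + 8*b^3 + (-24)*b^2*c + (-6)*b^2 + 4*b*c^3 + 12*b*c^2 + (-3)*b*c + (-4)*b + 4*c^3 + 12*c^2 + 9*c + 2"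
definition Pa12 :: "complex \<Rightarrow> complex \<Rightarrow> complex \<Rightarrow> complex" where "Pa12 a b c = 2*a^2*b + 4*a^2*c + 2*a^2 + (-6)*a*b^2 + (-5)*a*b + 2*a*c + 1*a + 4*b^3 + (-4)*b^2*c + 4*b^2 + (-6)*b*c + (-1)*b + (-2)*c + (-1)"
lemma Pa_id4: "(Pa4 a b c) * (1) = ((-1) * (2/1) * a + 1 * (2/1) * b + (-1) * (2/1) * c + (-1/2) * (2/1) * 1)"
  unfolding Pa4_def Pa5_def Pa6_def Pa7_def Pa8_def Pa9_def Pa10_def Pa11_def Pa12_def by (algebra | simp add: algebra_simps)
lemma Pa_id5: "(Pa5 a b c) * (1) = ((-1) * (2/1) * a * b + 1 * (2/1) * a * c + (-1) * (1/1) * (Pa4 a b c) + (-1/2) * (2/1) * a)"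
  unfolding Pa4_def Pa5_def Pa6_def Pa7_def Pa8_def Pa9_def Pa10_def Pa11_def Pa12_def by (algebra | simp add: algebra_simps)
lemma Pa_id6: "(Pa6 a b c) * (1) = ((-1) * (2/1) * a * b * c + 1 * (1/1) * b * (Pa4 a b c) + (-1) * (1/1) * (Pa5 a b c) + (-1/2) * (2/1) * a * b)"
  unfolding Pa4_def Pa5_def Pa6_def Pa7_def Pa8_def Pa9_def Pa10_def Pa11_def Pa12_def by (algebra | simp add: algebra_simps)
lemma Pa_id7: "(Pa7 a b c) * (1) = ((-1) * (1/1) * b * c * (Pa4 a b c) + 1 * (1/1) * c * (Pa5 a b c) + (-1) * (1/1) * (Pa6 a b c) + (-1/2) * (2/1) * a * b * c)"
  unfolding Pa4_def Pa5_def Pa6_def Pa7_def Pa8_def Pa9_def Pa10_def Pa11_def Pa12_def by (algebra | simp add: algebra_simps)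
lemma Pa_id8: "(Pa8 a b c) * (1) = ((-1) * (1/1) * c * (Pa4 a b c) * (Pa5 a b c) + 1 * (1/1) * (Pa4 a b c) * (Pa6 a b c) + (-1) * (2/1) * a * (Pa7 a b c) + (-1/2) * (2/1) * a * b * c * (Pa4 a b c))"
  unfolding Pa4_def Pa5_def Pa6_def Pa7_def Pa8_def Pa9_def Pa10_def Pa11_def Pa12_def by (algebra | simp add: algebra_simps)
lemma Pa_id9: "(Pa9 a b c) * (1) = ((-1) * (1/1) * (Pa4 a b c) * (Pa5 a b c) * (Pa6 a b c) + 1 * (2/1) * a * (Pa5 a b c) * (Pa7 a b c) + (-1) * (2/1) * a * b * (Pa8 a b c) + (-1/2) * (2/1) * a * b * c * (Pa4 a b c) * (Pa5 a b c))"
  unfolding Pa4_def Pa5_def Pa6_def Pa7_def Pa8_def Pa9_def Pa10_def Pa11_def Pa12_def by (algebra | simp add: algebra_simps)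
lemma Pa_id10: "(Pa10 a b c) * (1) = ((-1) * (2/1) * (Pa5 a b c) * (Pa6 a b c) * (Pa7 a b c) + 1 * (2/1) * b * (Pa6 a b c) * (Pa8 a b c) + (-1) * (2/1) * b * c * (Pa9 a b c) + (-1/2) * (2/1) * b * c * (Pa4 a b c) * (Pa5 a b c) * (Pa6 a b c))"
  unfolding Pa4_def Pa5_def Pa6_def Pa7_def Pa8_def Pa9_def Pa10_def Pa11_def Pa12_def by (algebra | simp add: algebra_simps)
lemma Pa_id11: "(Pa11 a b c) * ((Pa8 a b c)) = ((-1) * (2/1) * (Pa6 a b c) * (Pa7 a b c) * (Pa8 a b c) + 1 * (2/1) * c * (Pa7 a b c) * (Pa9 a b c) + (-1) * (1/1) * c * (Pa4 a b c) * (Pa10 a b c) + (-1/2) * (2/1) * c * (Pa4 a b c) * (Pa5 a b c) * (Pa6 a b c) * (Pa7 a b c))"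
  unfolding Pa4_def Pa5_def Pa6_def Pa7_def Pa8_def Pa9_def Pa10_def Pa11_def Pa12_def by (algebra | simp add: algebra_simps)
lemma Pa_id12: "(Pa12 a b c) * ((Pa9 a b c)) = ((-1) * (2/1) * (Pa7 a b c) * (Pa9 a b c) + 1 * (1/1) * (Pa4 a b c) * (Pa10 a b c) + (-1) * (1/1) * (Pa4 a b c) * (Pa5 a b c) * (Pa11 a b c) + (-1/2) * (2/1) * (Pa4 a b c) * (Pa5 a b c) * (Pa6 a b c) * (Pa7 a b c))"
  unfolding Pa4_def Pa5_def Pa6_def Pa7_def Pa8_def Pa9_def Pa10_def Pa11_def Pa12_def by (algebra | simp add: algebra_simps)
lemma Pa_id13: "(a) * ((Pa10 a b c)) = ((-1) * (1/1) * (Pa10 a b c) + 1 * (1/1) * (Pa5 a b c) * (Pa11 a b c) + (-1) * (1/1) * (Pa5 a b c) * (Pa6 a b c) * (Pa12 a b c) + (-1/2) * (2/1) * (Pa5 a b c) * (Pa6 a b c) * (Pa7 a b c))"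
  unfolding Pa4_def Pa5_def Pa6_def Pa7_def Pa8_def Pa9_def Pa10_def Pa11_def Pa12_def by (algebra | simp add: algebra_simps)
lemma per_a:
  fixes x :: "nat \<Rightarrow> complex" 
  assumes sol: "rec3_solution (\<lambda>a b c. -1 - 2*a + 2*b - 2*c) (\<lambda>a b c. 2*a) x"
  shows "x 13 = x 1"
proof -
  have r: "\<And>n. n \<ge> 4 \<Longrightarrow> 2 * x (n-3) \<noteq> 0 \<and> x n = (-1 - 2*(x (n-3)) + 2*(x (n-2)) - 2*(x (n-1))) / (2 * x (n-3))"
    using sol unfolding rec3_solution_def by auto
  have nz: "x k \<noteq> 0" if "1 \<le> k" for k using r[of "k+3"] that by auto
  define a where "a = x 1"
  define b where "b = x 2"
  define c where "c = x 3"
  have e1: "x 1 = a" and e2: "x 2 = b" and e3: "x 3 = c" by (simp_all add: a_def b_def c_def)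
  have nza: "a \<noteq> 0" and nzb: "b \<noteq> 0" and nzc: "c \<noteq> 0" using nz[of 1] nz[of 2] nz[of 3] by (simp_all add: a_def b_def c_def)
  have i4: "Pa4 a b c = ((-1) * (2/1) * a + 1 * (2/1) * b + (-1) * (2/1) * c + (-1/2) * (2/1) * 1) / (1)"
    using Pa_id4[of a b c] nza nzb nzc  by (simp add: eq_divide_eq)
  have e4: "x 4 = (1/2) * Pa4 a b c / (a)"
  proof -
    have "x 4 = (-1 - 2*(x 1) + 2*(x 2) - 2*(x 3)) / (2 * x 1)"
      using r[of 4] by simp
    also have "\<dots> = (1/2) * Pa4 a b c / (a)"
      unfolding e1 e2 e3 i4 using nza nzb nzc by (simp add: field_simps)
    finally show ?thesis .
  qed
  have nzp4: "Pa4 a b c \<noteq> 0" using e4 nz[of 4] by auto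
  have i5: "Pa5 a b c = ((-1) * (2/1) * a * b + 1 * (2/1) * a * c + (-1) * (1/1) * (Pa4 a b c) + (-1/2) * (2/1) * a) / (1)"
    using Pa_id5[of a b c] nza nzb nzc nzp4  by (simp add: eq_divide_eq)
  have e5: "x 5 = (1/2) * Pa5 a b c / (a * b)"
  proof -
    have "x 5 = (-1 - 2*(x 2) + 2*(x 3) - 2*(x 4)) / (2 * x 2)"
      using r[of 5] by simp
    also have "\<dots> = (1/2) * Pa5 a b c / (a * b)"
      unfolding e2 e3 e4 i5 using nza nzb nzc nzp4 by (simp add: field_simps)
    finally show ?thesis .
  qed
  have nzp5: "Pa5 a b c \<noteq> 0" using e5 nz[of 5] by auto
  have i6: "Pa6 a b c = ((-1) * (2/1) * a * b * c + 1 * (1/1) * b * (Pa4 a b c) + (-1) * (1/1) * (Pa5 a b c) + (-1/2) * (2/1) * a * b) / (1)"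
    using Pa_id6[of a b c] nza nzb nzc nzp4 nzp5  by (simp add: eq_divide_eq)
  have e6: "x 6 = (1/2) * Pa6 a b c / (a * b * c)"
  proof -
    have "x 6 = (-1 - 2*(x 3) + 2*(x 4) - 2*(x 5)) / (2 * x 3)"
      using r[of 6] by simp
    also have "\<dots> = (1/2) * Pa6 a b c / (a * b * c)"
      unfolding e3 e4 e5 i6 using nza nzb nzc nzp4 nzp5 by (simp add: field_simps)
    finally show ?thesis .
  qed
  have nzp6: "Pa6 a b c \<noteq> 0" using e6 nz[of 6] by auto
  have i7: "Pa7 a b c = ((-1) * (1/1) * b * c * (Pa4 a b c) + 1 * (1/1) * c * (Pa5 a b c) + (-1) * (1/1) * (Pa6 a b c) + (-1/2) * (2/1) * a * b * c) / (1)"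
    using Pa_id7[of a b c] nza nzb nzc nzp4 nzp5 nzp6  by (simp add: eq_divide_eq)
  have e7: "x 7 = (1/1) * Pa7 a b c / (b * c * (Pa4 a b c))"
  proof -
    have "x 7 = (-1 - 2*(x 4) + 2*(x 5) - 2*(x 6)) / (2 * x 4)"
      using r[of 7] by simp
    also have "\<dots> = (1/1) * Pa7 a b c / (b * c * (Pa4 a b c))"
      unfolding e4 e5 e6 i7 using nza nzb nzc nzp4 nzp5 nzp6 by (simp add: field_simps)
    finally show ?thesis .
  qed
  have nzp7: "Pa7 a b c \<noteq> 0" using e7 nz[of 7] by auto
  have i8: "Pa8 a b c = ((-1) * (1/1) * c * (Pa4 a b c) * (Pa5 a b c) + 1 * (1/1) * (Pa4 a b c) * (Pa6 a b c) + (-1) * (2/1) * a * (Pa7 a b c) + (-1/2) * (2/1) * a * b * c * (Pa4 a b c)) / (1)"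
    using Pa_id8[of a b c] nza nzb nzc nzp4 nzp5 nzp6 nzp7  by (simp add: eq_divide_eq)
  have e8: "x 8 = (1/1) * Pa8 a b c / (c * (Pa4 a b c) * (Pa5 a b c))"
  proof -
    have "x 8 = (-1 - 2*(x 5) + 2*(x 6) - 2*(x 7)) / (2 * x 5)"
      using r[of 8] by simp
    also have "\<dots> = (1/1) * Pa8 a b c / (c * (Pa4 a b c) * (Pa5 a b c))"
      unfolding e5 e6 e7 i8 using nza nzb nzc nzp4 nzp5 nzp6 nzp7 by (simp add: field_simps)
    finally show ?thesis .
  qed
  have nzp8: "Pa8 a b c \<noteq> 0" using e8 nz[of 8] by auto
  have i9: "Pa9 a b c = ((-1) * (1/1) * (Pa4 a b c) * (Pa5 a b c) * (Pa6 a b c) + 1 * (2/1) * a * (Pa5 a b c) * (Pa7 a b c) + (-1) * (2/1) * a * b * (Pa8 a b c) + (-1/2) * (2/1) * a * b * c * (Pa4 a b c) * (Pa5 a b c)) / (1)"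
    using Pa_id9[of a b c] nza nzb nzc nzp4 nzp5 nzp6 nzp7 nzp8  by (simp add: eq_divide_eq)
  have e9: "x 9 = (1/1) * Pa9 a b c / ((Pa4 a b c) * (Pa5 a b c) * (Pa6 a b c))"
  proof -
    have "x 9 = (-1 - 2*(x 6) + 2*(x 7) - 2*(x 8)) / (2 * x 6)"
      using r[of 9] by simp
    also have "\<dots> = (1/1) * Pa9 a b c / ((Pa4 a b c) * (Pa5 a b c) * (Pa6 a b c))"
      unfolding e6 e7 e8 i9 using nza nzb nzc nzp4 nzp5 nzp6 nzp7 nzp8 by (simp add: field_simps)
    finally show ?thesis .
  qed
  have nzp9: "Pa9 a b c \<noteq> 0" using e9 nz[of 9] by auto
  have i10: "Pa10 a b c = ((-1) * (2/1) * (Pa5 a b c) * (Pa6 a b c) * (Pa7 a b c) + 1 * (2/1) * b * (Pa6 a b c) * (Pa8 a b c) + (-1) * (2/1) * b * c * (Pa9 a b c) + (-1/2) * (2/1) * b * c * (Pa4 a b c) * (Pa5 a b c) * (Pa6 a b c)) / (1)"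
    using Pa_id10[of a b c] nza nzb nzc nzp4 nzp5 nzp6 nzp7 nzp8 nzp9  by (simp add: eq_divide_eq)
  have e10: "x 10 = (1/2) * Pa10 a b c / ((Pa5 a b c) * (Pa6 a b c) * (Pa7 a b c))"
  proof -
    have "x 10 = (-1 - 2*(x 7) + 2*(x 8) - 2*(x 9)) / (2 * x 7)"
      using r[of 10] by simp
    also have "\<dots> = (1/2) * Pa10 a b c / ((Pa5 a b c) * (Pa6 a b c) * (Pa7 a b c))"
      unfolding e7 e8 e9 i10 using nza nzb nzc nzp4 nzp5 nzp6 nzp7 nzp8 nzp9 by (simp add: field_simps)
    finally show ?thesis .
  qed
  have nzp10: "Pa10 a b c \<noteq> 0" using e10 nz[of 10] by auto
  have i11: "Pa11 a b c = ((-1) * (2/1) * (Pa6 a b c) * (Pa7 a b c) * (Pa8 a b c) + 1 * (2/1) * c * (Pa7 a b c) * (Pa9 a b c) + (-1) * (1/1) * c * (Pa4 a b c) * (Pa10 a b c) + (-1/2) * (2/1) * c * (Pa4 a b c) * (Pa5 a b c) * (Pa6 a b c) * (Pa7 a b c)) / ((Pa8 a b c))"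
    using Pa_id11[of a b c] nza nzb nzc nzp4 nzp5 nzp6 nzp7 nzp8 nzp9 nzp10  by (simp add: eq_divide_eq)
  have e11: "x 11 = (1/2) * Pa11 a b c / ((Pa6 a b c) * (Pa7 a b c))"
  proof -
    have "x 11 = (-1 - 2*(x 8) + 2*(x 9) - 2*(x 10)) / (2 * x 8)"
      using r[of 11] by simp
    also have "\<dots> = (1/2) * Pa11 a b c / ((Pa6 a b c) * (Pa7 a b c))"
      unfolding e8 e9 e10 i11 using nza nzb nzc nzp4 nzp5 nzp6 nzp7 nzp8 nzp9 nzp10 by (simp add: field_simps)
    finally show ?thesis .
  qed
  have i12: "Pa12 a b c = ((-1) * (2/1) * (Pa7 a b c) * (Pa9 a b c) + 1 * (1/1) * (Pa4 a b c) * (Pa10 a b c) + (-1) * (1/1) * (Pa4 a b c) * (Pa5 a b c) * (Pa11 a b c) + (-1/2) * (2/1) * (Pa4 a b c) * (Pa5 a b c) * (Pa6 a b c) * (Pa7 a b c)) / ((Pa9 a b c))"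
    using Pa_id12[of a b c] nza nzb nzc nzp4 nzp5 nzp6 nzp7 nzp8 nzp9 nzp10  by (simp add: eq_divide_eq)
  have e12: "x 12 = (1/2) * Pa12 a b c / ((Pa7 a b c))"
  proof -
    have "x 12 = (-1 - 2*(x 9) + 2*(x 10) - 2*(x 11)) / (2 * x 9)"
      using r[of 12] by simp
    also have "\<dots> = (1/2) * Pa12 a b c / ((Pa7 a b c))"
      unfolding e9 e10 e11 i12 using nza nzb nzc nzp4 nzp5 nzp6 nzp7 nzp8 nzp9 nzp10 by (simp add: field_simps)
    finally show ?thesis .
  qed
  have i13: "a = ((-1) * (1/1) * (Pa10 a b c) + 1 * (1/1) * (Pa5 a b c) * (Pa11 a b c) + (-1) * (1/1) * (Pa5 a b c) * (Pa6 a b c) * (Pa12 a b c) + (-1/2) * (2/1) * (Pa5 a b c) * (Pa6 a b c) * (Pa7 a b c)) / ((Pa10 a b c))"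
    using Pa_id13[of a b c] nza nzb nzc nzp4 nzp5 nzp6 nzp7 nzp8 nzp9 nzp10  by (simp add: eq_divide_eq)
  have e13: "x 13 = ((-1) * (1/1) * (Pa10 a b c) + 1 * (1/1) * (Pa5 a b c) * (Pa11 a b c) + (-1) * (1/1) * (Pa5 a b c) * (Pa6 a b c) * (Pa12 a b c) + (-1/2) * (2/1) * (Pa5 a b c) * (Pa6 a b c) * (Pa7 a b c)) / ((Pa10 a b c))"
  proof -
    have "x 13 = (-1 - 2*(x 10) + 2*(x 11) - 2*(x 12)) / (2 * x 10)"
      using r[of 13] by simp
    also have "\<dots> = ((-1) * (1/1) * (Pa10 a b c) + 1 * (1/1) * (Pa5 a b c) * (Pa11 a b c) + (-1) * (1/1) * (Pa5 a b c) * (Pa6 a b c) * (Pa12 a b c) + (-1/2) * (2/1) * (Pa5 a b c) * (Pa6 a b c) * (Pa7 a b c)) / ((Pa10 a b c))"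
      unfolding e10 e11 e12  using nza nzb nzc nzp4 nzp5 nzp6 nzp7 nzp8 nzp9 nzp10 by (simp add: field_simps)
    finally show ?thesis .
  qed
  show ?thesis using e13 i13 a_def by simp
qed
definition Pb4 :: "complex \<Rightarrow> complex \<Rightarrow> complex \<Rightarrow> complex \<Rightarrow> complex" where "Pb4 w a b c = (1 + (1)*w)*a + 1*b + (-1*w)*c + (-1 + (-1)*w)"
definition Pb5 :: "complex \<Rightarrow> complex \<Rightarrow> complex \<Rightarrow> complex \<Rightarrow> complex" where "Pb5 w a b c = (1 + (1)*w)*a*b + 1*a*c + (-1*w)*a + (-1*w)*b + (-1 + (-1)*w)*c + (-1)"
definition Pb6 :: "complex \<Rightarrow> complex \<Rightarrow> complex \<Rightarrow> complex \<Rightarrow> complex" where "Pb6 w a b c = (1 + (1)*w)*a*b*c + 1*a*b + (-1*w)*a*c + (-1 + (-1)*w)*a + 1*b^2 + (-1*w)*b*c + (-2 + (-2)*w)*b + (-1)*c + (1*w)"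
definition Pb7 :: "complex \<Rightarrow> complex \<Rightarrow> complex \<Rightarrow> complex \<Rightarrow> complex" where "Pb7 w a b c = (1 + (1)*w)*a*b*c + (-1*w)*a*b + 1*a*c^2 + (-1 + (-2)*w)*a*c + (-1)*a + (1 + (1)*w)*b^2*c + (-1*w)*b^2 + 1*b*c^2 + (-1 + (-3)*w)*b*c + (-2)*b + (-1 + (-1)*w)*c^2 + (-1 + (1)*w)*c + (1 + (1)*w)"
definition Pb8 :: "complex \<Rightarrow> complex \<Rightarrow> complex \<Rightarrow> complex \<Rightarrow> complex" where "Pb8 w a b c = (1 + (1)*w)*a*b^2*c + 1*a*b^2 + (2 + (1)*w)*a*b*c^2 + (1 + (-3)*w)*a*b*c + (-2 + (-2)*w)*a*b + 1*a*c^3 + (-1 + (-3)*w)*a*c^2 + (-3 + (-1)*w)*a*c + (1*w)*a + 1*b^3 + (1 + (-2)*w)*b^2*c + (-3 + (-3)*w)*b^2 + (-1 + (-3)*w)*b*c^2 + (-6 + (-2)*w)*b*c + (3*w)*b + (-1 + (-1)*w)*c^3 + (-2 + (1)*w)*c^2 + (2 + (3)*w)*c + 1"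
definition Pb9 :: "complex \<Rightarrow> complex \<Rightarrow> complex \<Rightarrow> complex \<Rightarrow> complex" where "Pb9 w a b c = (1 + (1)*w)*a^3*b*c^2 + 1*a^3*b*c + 1*a^3*c^3 + (-2*w)*a^3*c^2 + (-1 + (-1)*w)*a^3*c + (1 + (1)*w)*a^2*b^2*c^2 + (3 + (1)*w)*a^2*b^2*c + 1*a^2*b^2 + 1*a^2*b*c^3 + (2 + (-5)*w)*a^2*b*c^2 + (-4 + (-8)*w)*a^2*b*c + (-2 + (-2)*w)*a^2*b + (-2 + (-3)*w)*a^2*c^3 + (-7 + (-3)*w)*a^2*c^2 + (-3 + (2)*w)*a^2*c + (1*w)*a^2 + (2 + (1)*w)*a*b^3*c + 2*a*b^3 + (2 + (-2)*w)*a*b^2*c^2 + (-3 + (-11)*w)*a*b^2*c + (-6 + (-6)*w)*a*b^2 + (-1 + (-2)*w)*a*b*c^3 + (-12 + (-8)*w)*a*b*c^2 + (-13 + (3)*w)*a*b*c + (6*w)*a*b + (-2 + (1)*w)*a*c^3 + (2 + (8)*w)*a*c^2 + (7 + (6)*w)*a*c + 2*a + 1*b^4 + (-3*w)*b^3*c + (-4 + (-4)*w)*b^3 + (-3 + (-3)*w)*b^2*c^2 + (-9)*b^2*c + (6*w)*b^2 + (-1)*b*c^3 + (6*w)*b*c^2 + (9 + (9)*w)*b*c + 4*b + (1 + (1)*w)*c^3 + 3*c^2 + (-3*w)*c + (-1 + (-1)*w)"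
definition Pb10 :: "complex \<Rightarrow> complex \<Rightarrow> complex \<Rightarrow> complex \<Rightarrow> complex" where "Pb10 w a b c = (1*w)*a^3*b^3*c + (1 + (1)*w)*a^3*b^3 + (2 + (3)*w)*a^3*b^2*c^2 + (6 + (1)*w)*a^3*b^2*c + (-3*w)*a^3*b^2 + (3 + (2)*w)*a^3*b*c^3 + (4 + (-5)*w)*a^3*b*c^2 + (-7 + (-9)*w)*a^3*b*c + (-3)*a^3*b + 1*a^3*c^4 + (-1 + (-4)*w)*a^3*c^3 + (-6 + (-3)*w)*a^3*c^2 + (-1 + (3)*w)*a^3*c + (1 + (1)*w)*a^3 + (1 + (2)*w)*a^2*b^4*c + (3 + (2)*w)*a^2*b^4 + (5 + (4)*w)*a^2*b^3*c^2 + (13 + (-3)*w)*a^2*b^3*c + (-3 + (-12)*w)*a^2*b^3 + (5 + (1)*w)*a^2*b^2*c^3 + (4 + (-21)*w)*a^2*b^2*c^2 + (-35 + (-35)*w)*a^2*b^2*c + (-15 + (3)*w)*a^2*b^2 + (1 + (-1)*w)*a^2*b*c^4 + (-8 + (-17)*w)*a^2*b*c^3 + (-39 + (-14)*w)*a^2*b*c^2 + (-5 + (30)*w)*a^2*b*c + (12 + (11)*w)*a^2*b + (-3 + (-3)*w)*a^2*c^4 + (-9 + (3)*w)*a^2*c^3 + (9 + (18)*w)*a^2*c^2 + (12 + (3)*w)*a^2*c + (-3*w)*a^2 + (1 + (1)*w)*a*b^5*c + (3 + (1)*w)*a*b^5 + (3 + (1)*w)*a*b^4*c^2 + (7 + (-8)*w)*a*b^4*c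 + (-8 + (-15)*w)*a*b^4 + (2 + (-1)*w)*a*b^3*c^3 + (-6 + (-23)*w)*a*b^3*c^2 + (-48 + (-33)*w)*a*b^3*c + (-18 + (12)*w)*a*b^3 + (-1*w)*a*b^2*c^4 + (-13 + (-15)*w)*a*b^2*c^3 + (-49 + (-3)*w)*a*b^2*c^2 + (7 + (64)*w)*a*b^2*c + (30 + (22)*w)*a*b^2 + (-4 + (-2)*w)*a*b*c^4 + (-12 + (13)*w)*a*b*c^3 + (35 + (51)*w)*a*b*c^2 + (43 + (4)*w)*a*b*c + (-2 + (-15)*w)*a*b + (3*w)*a*c^4 + (12 + (9)*w)*a*c^3 + (9 + (-9)*w)*a*c^2 + (-9 + (-12)*w)*a*c + (-3)*a + 1*b^6 + (1 + (-3)*w)*b^5*c + (-5 + (-6)*w)*b^5 + (-3 + (-6)*w)*b^4*c^2 + (-19 + (-8)*w)*b^4*c + (-5 + (10)*w)*b^4 + (-4 + (-3)*w)*b^3*c^3 + (-15 + (6)*w)*b^3*c^2 + (14 + (36)*w)*b^3*c + (20 + (10)*w)*b^3 + (-1)*b^2*c^4 + (-1 + (9)*w)*b^2*c^3 + (27 + (27)*w)*b^2*c^2 + (28 + (-6)*w)*b^2*c + (-5 + (-15)*w)*b^2 + (1 + (2)*w)*b*c^4 + (11 + (5)*w)*b*c^3 + (6 + (-15)*w)*b*c^2 + (-16 + (-17)*w)*b*c + (-5 + (1)*w)*b + 1*c^4 + (-1 + (-4)*w)*c^3 + (-6 + (-3)*w)*c^2 + (-1 + (3)*w)*c + (1 +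 (1)*w)"
definition Pb11 :: "complex \<Rightarrow> complex \<Rightarrow> complex \<Rightarrow> complex \<Rightarrow> complex" where "Pb11 w a b c = (1 + (1)*w)*a^3*b*c^2 + 1*a^3*b*c + 1*a^3*c^3 + (-2*w)*a^3*c^2 + (-1 + (-1)*w)*a^3*c + (1 + (1)*w)*a^2*b^2*c^2 + (3 + (1)*w)*a^2*b^2*c + 1*a^2*b^2 + 1*a^2*b*c^3 + (2 + (-5)*w)*a^2*b*c^2 + (-4 + (-8)*w)*a^2*b*c + (-2 + (-2)*w)*a^2*b + (-2 + (-3)*w)*a^2*c^3 + (-7 + (-3)*w)*a^2*c^2 + (-3 + (2)*w)*a^2*c + (1*w)*a^2 + (2 + (1)*w)*a*b^3*c + 2*a*b^3 + (2 + (-2)*w)*a*b^2*c^2 + (-3 + (-11)*w)*a*b^2*c + (-6 + (-6)*w)*a*b^2 + (-1 + (-2)*w)*a*b*c^3 + (-12 + (-8)*w)*a*b*c^2 + (-13 + (3)*w)*a*b*c + (6*w)*a*b + (-2 + (1)*w)*a*c^3 + (2 + (8)*w)*a*c^2 + (7 + (6)*w)*a*c + 2*a + 1*b^4 + (-3*w)*b^3*c + (-4 + (-4)*w)*b^3 + (-3 + (-3)*w)*b^2*c^2 + (-9)*b^2*c + (6*w)*b^2 + (-1)*b*c^3 + (6*w)*b*c^2 + (9 + (9)*w)*b*c + 4*b + (1 + (1)*w)*c^3 + 3*c^2 + (-3*w)*c + (-1 + (-1)*w)"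
definition Pb12 :: "complex \<Rightarrow> complex \<Rightarrow> complex \<Rightarrow> complex \<Rightarrow> complex" where "Pb12 w a b c = (1 + (1)*w)*a^2*b + 1*a^2*c + (-1*w)*a^2 + (2 + (1)*w)*a*b^2 + (1 + (-1)*w)*a*b*c + (-1 + (-4)*w)*a*b + (-2 + (-2)*w)*a*c + (-2)*a + 1*b^3 + (-1*w)*b^2*c + (-2 + (-3)*w)*b^2 + (-2 + (-1)*w)*b*c + (-2 + (1)*w)*b + (1*w)*c + (1 + (1)*w)"
lemma Pb_id4: assumes "w^2 + w + 1 = 0" shows "(Pb4 w a b c) * (1) = ((1+w) * (1/1) * a + 1 * (1/1) * b + (-w) * (1/1) * c + (-1-w) * (1/1) * 1)"
  unfolding Pb4_def Pb5_def Pb6_def Pb7_def Pb8_def Pb9_def Pb10_def Pb11_def Pb12_def using assms by (algebra | simp add: algebra_simps)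
lemma Pb_id5: assumes "w^2 + w + 1 = 0" shows "(Pb5 w a b c) * (1) = ((1+w) * (1/1) * a * b + 1 * (1/1) * a * c + (-w) * (1/1) * (Pb4 w a b c) + (-1-w) * (1/1) * a)"
  unfolding Pb4_def Pb5_def Pb6_def Pb7_def Pb8_def Pb9_def Pb10_def Pb11_def Pb12_def using assms by (algebra | simp add: algebra_simps)
lemma Pb_id6: assumes "w^2 + w + 1 = 0" shows "(Pb6 w a b c) * (1) = ((1+w) * (1/1) * a * b * c + 1 * (1/1) * b * (Pb4 w a b c) + (-w) * (1/1) * (Pb5 w a b c) + (-1-w) * (1/1) * a * b)"
  unfolding Pb4_def Pb5_def Pb6_def Pb7_def Pb8_def Pb9_def Pb10_def Pb11_def Pb12_def using assms by (algebra | simp add: algebra_simps)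
lemma Pb_id7: assumes "w^2 + w + 1 = 0" shows "(Pb7 w a b c) * (1) = ((1+w) * (1/1) * b * c * (Pb4 w a b c) + 1 * (1/1) * c * (Pb5 w a b c) + (-w) * (1/1) * (Pb6 w a b c) + (-1-w) * (1/1) * a * b * c)"
  unfolding Pb4_def Pb5_def Pb6_def Pb7_def Pb8_def Pb9_def Pb10_def Pb11_def Pb12_def using assms by (algebra | simp add: algebra_simps)
lemma Pb_id8: assumes "w^2 + w + 1 = 0" shows "(Pb8 w a b c) * (1) = ((1+w) * (1/1) * c * (Pb4 w a b c) * (Pb5 w a b c) + 1 * (1/1) * (Pb4 w a b c) * (Pb6 w a b c) + (-w) * (1/1) * a * (Pb7 w a b c) + (-1-w) * (1/1) * a * b * c * (Pb4 w a b c))"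
  unfolding Pb4_def Pb5_def Pb6_def Pb7_def Pb8_def Pb9_def Pb10_def Pb11_def Pb12_def using assms by (algebra | simp add: algebra_simps)
lemma Pb_id9: assumes "w^2 + w + 1 = 0" shows "(Pb9 w a b c) * (1) = ((1+w) * (1/1) * (Pb4 w a b c) * (Pb5 w a b c) * (Pb6 w a b c) + 1 * (1/1) * a * (Pb5 w a b c) * (Pb7 w a b c) + (-w) * (1/1) * a * b * (Pb8 w a b c) + (-1-w) * (1/1) * a * b * c * (Pb4 w a b c) * (Pb5 w a b c))"
  unfolding Pb4_def Pb5_def Pb6_def Pb7_def Pb8_def Pb9_def Pb10_def Pb11_def Pb12_def using assms by (algebra | simp add: algebra_simps)
lemma Pb_id10: assumes "w^2 + w + 1 = 0" shows "(Pb10 w a b c) * (1) = ((1+w) * (1/1) * (Pb5 w a b c) * (Pb6 w a b c) * (Pb7 w a b c) + 1 * (1/1) * b * (Pb6 w a b c) * (Pb8 w a b c) + (-w) * (1/1) * b * c * (Pb9 w a b c) + (-1-w) * (1/1) * b * c * (Pb4 w a b c) * (Pb5 w a b c) * (Pb6 w a b c))"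
  unfolding Pb4_def Pb5_def Pb6_def Pb7_def Pb8_def Pb9_def Pb10_def Pb11_def Pb12_def using assms by (algebra | simp add: algebra_simps)
lemma Pb_id11: assumes "w^2 + w + 1 = 0" shows "(Pb11 w a b c) * ((Pb8 w a b c)) = ((1+w) * (1/1) * (Pb6 w a b c) * (Pb7 w a b c) * (Pb8 w a b c) + 1 * (1/1) * c * (Pb7 w a b c) * (Pb9 w a b c) + (-w) * (1/1) * c * (Pb4 w a b c) * (Pb10 w a b c) + (-1-w) * (1/1) * c * (Pb4 w a b c) * (Pb5 w a b c) * (Pb6 w a b c) * (Pb7 w a b c))"
  unfolding Pb4_def Pb5_def Pb6_def Pb7_def Pb8_def Pb9_def Pb10_def Pb11_def Pb12_def using assms by (algebra | simp add: algebra_simps)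
lemma Pb_id12: assumes "w^2 + w + 1 = 0" shows "(Pb12 w a b c) * ((Pb9 w a b c)) = ((1+w) * (1/1) * (Pb7 w a b c) * (Pb9 w a b c) + 1 * (1/1) * (Pb4 w a b c) * (Pb10 w a b c) + (-w) * (1/1) * (Pb4 w a b c) * (Pb5 w a b c) * (Pb11 w a b c) + (-1-w) * (1/1) * (Pb4 w a b c) * (Pb5 w a b c) * (Pb6 w a b c) * (Pb7 w a b c))"
  unfolding Pb4_def Pb5_def Pb6_def Pb7_def Pb8_def Pb9_def Pb10_def Pb11_def Pb12_def using assms by (algebra | simp add: algebra_simps)
lemma Pb_id13: assumes "w^2 + w + 1 = 0" shows "(a) * ((Pb10 w a b c)) = ((1+w) * (1/1) * (Pb10 w a b c) + 1 * (1/1) * (Pb5 w a b c) * (Pb11 w a b c) + (-w) * (1/1) * (Pb5 w a b c) * (Pb6 w a b c) * (Pb12 w a b c) + (-1-w) * (1/1) * (Pb5 w a b c) * (Pb6 w a b c) * (Pb7 w a b c))"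
  unfolding Pb4_def Pb5_def Pb6_def Pb7_def Pb8_def Pb9_def Pb10_def Pb11_def Pb12_def using assms by (algebra | simp add: algebra_simps)
lemma per_w:
  fixes x :: "nat \<Rightarrow> complex" and w :: complex
  assumes w: "w^2 + w + 1 = 0" and sol: "rec3_solution (\<lambda>a b c. (2+2*w)*a + 2*b - 2*w*c + (-2-2*w)) (\<lambda>a b c. 2*a) x"
  shows "x 13 = x 1"
proof -
  have r: "\<And>n. n \<ge> 4 \<Longrightarrow> 2 * x (n-3) \<noteq> 0 \<and> x n = ((2+2*w)*(x (n-3)) + 2*(x (n-2)) - 2*w*(x (n-1)) + (-2-2*w)) / (2 * x (n-3))"
    using sol unfolding rec3_solution_def by auto
  have nz: "x k \<noteq> 0" if "1 \<le> k" for k using r[of "k+3"] that by auto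
  define a where "a = x 1"
  define b where "b = x 2"
  define c where "c = x 3"
  have e1: "x 1 = a" and e2: "x 2 = b" and e3: "x 3 = c" by (simp_all add: a_def b_def c_def)
  have nza: "a \<noteq> 0" and nzb: "b \<noteq> 0" and nzc: "c \<noteq> 0" using nz[of 1] nz[of 2] nz[of 3] by (simp_all add: a_def b_def c_def)
  have i4: "Pb4 w a b c = ((1+w) * (1/1) * a + 1 * (1/1) * b + (-w) * (1/1) * c + (-1-w) * (1/1) * 1) / (1)"
    using Pb_id4[OF w, of a b c] nza nzb nzc w by (simp add: eq_divide_eq)
  have e4: "x 4 = (1/1) * Pb4 w a b c / (a)"
  proof -
    have "x 4 = ((2+2*w)*(x 1) + 2*(x 2) - 2*w*(x 3) + (-2-2*w)) / (2 * x 1)"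
      using r[of 4] by simp
    also have "\<dots> = (1/1) * Pb4 w a b c / (a)"
      unfolding e1 e2 e3 i4 using nza nzb nzc by (simp add: field_simps)
    finally show ?thesis .
  qed
  have nzp4: "Pb4 w a b c \<noteq> 0" using e4 nz[of 4] by auto
  have i5: "Pb5 w a b c = ((1+w) * (1/1) * a * b + 1 * (1/1) * a * c + (-w) * (1/1) * (Pb4 w a b c) + (-1-w) * (1/1) * a) / (1)"
    using Pb_id5[OF w, of a b c] nza nzb nzc nzp4 w by (simp add: eq_divide_eq)
  have e5: "x 5 = (1/1) * Pb5 w a b c / (a * b)"
  proof -
    have "x 5 = ((2+2*w)*(x 2) + 2*(x 3) - 2*w*(x 4) + (-2-2*w)) / (2 * x 2)"
      using r[of 5] by simp
    also have "\<dots> = (1/1) * Pb5 w a b c / (a * b)"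
      unfolding e2 e3 e4 i5 using nza nzb nzc nzp4 by (simp add: field_simps)
    finally show ?thesis .
  qed
  have nzp5: "Pb5 w a b c \<noteq> 0" using e5 nz[of 5] by auto
  have i6: "Pb6 w a b c = ((1+w) * (1/1) * a * b * c + 1 * (1/1) * b * (Pb4 w a b c) + (-w) * (1/1) * (Pb5 w a b c) + (-1-w) * (1/1) * a * b) / (1)"
    using Pb_id6[OF w, of a b c] nza nzb nzc nzp4 nzp5 w by (simp add: eq_divide_eq)
  have e6: "x 6 = (1/1) * Pb6 w a b c / (a * b * c)"
  proof -
    have "x 6 = ((2+2*w)*(x 3) + 2*(x 4) - 2*w*(x 5) + (-2-2*w)) / (2 * x 3)"
      using r[of 6] by simp
    also have "\<dots> = (1/1) * Pb6 w a b c / (a * b * c)"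
      unfolding e3 e4 e5 i6 using nza nzb nzc nzp4 nzp5 by (simp add: field_simps)
    finally show ?thesis .
  qed
  have nzp6: "Pb6 w a b c \<noteq> 0" using e6 nz[of 6] by auto
  have i7: "Pb7 w a b c = ((1+w) * (1/1) * b * c * (Pb4 w a b c) + 1 * (1/1) * c * (Pb5 w a b c) + (-w) * (1/1) * (Pb6 w a b c) + (-1-w) * (1/1) * a * b * c) / (1)"
    using Pb_id7[OF w, of a b c] nza nzb nzc nzp4 nzp5 nzp6 w by (simp add: eq_divide_eq)
  have e7: "x 7 = (1/1) * Pb7 w a b c / (b * c * (Pb4 w a b c))"
  proof -
    have "x 7 = ((2+2*w)*(x 4) + 2*(x 5) - 2*w*(x 6) + (-2-2*w)) / (2 * x 4)"
      using r[of 7] by simp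
    also have "\<dots> = (1/1) * Pb7 w a b c / (b * c * (Pb4 w a b c))"
      unfolding e4 e5 e6 i7 using nza nzb nzc nzp4 nzp5 nzp6 by (simp add: field_simps)
    finally show ?thesis .
  qed
  have nzp7: "Pb7 w a b c \<noteq> 0" using e7 nz[of 7] by auto
  have i8: "Pb8 w a b c = ((1+w) * (1/1) * c * (Pb4 w a b c) * (Pb5 w a b c) + 1 * (1/1) * (Pb4 w a b c) * (Pb6 w a b c) + (-w) * (1/1) * a * (Pb7 w a b c) + (-1-w) * (1/1) * a * b * c * (Pb4 w a b c)) / (1)"
    using Pb_id8[OF w, of a b c] nza nzb nzc nzp4 nzp5 nzp6 nzp7 w by (simp add: eq_divide_eq)
  have e8: "x 8 = (1/1) * Pb8 w a b c / (c * (Pb4 w a b c) * (Pb5 w a b c))"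
  proof -
    have "x 8 = ((2+2*w)*(x 5) + 2*(x 6) - 2*w*(x 7) + (-2-2*w)) / (2 * x 5)"
      using r[of 8] by simp
    also have "\<dots> = (1/1) * Pb8 w a b c / (c * (Pb4 w a b c) * (Pb5 w a b c))"
      unfolding e5 e6 e7 i8 using nza nzb nzc nzp4 nzp5 nzp6 nzp7 by (simp add: field_simps)
    finally show ?thesis .
  qed
  have nzp8: "Pb8 w a b c \<noteq> 0" using e8 nz[of 8] by auto
  have i9: "Pb9 w a b c = ((1+w) * (1/1) * (Pb4 w a b c) * (Pb5 w a b c) * (Pb6 w a b c) + 1 * (1/1) * a * (Pb5 w a b c) * (Pb7 w a b c) + (-w) * (1/1) * a * b * (Pb8 w a b c) + (-1-w) * (1/1) * a * b * c * (Pb4 w a b c) * (Pb5 w a b c)) / (1)"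
    using Pb_id9[OF w, of a b c] nza nzb nzc nzp4 nzp5 nzp6 nzp7 nzp8 w by (simp add: eq_divide_eq)
  have e9: "x 9 = (1/1) * Pb9 w a b c / ((Pb4 w a b c) * (Pb5 w a b c) * (Pb6 w a b c))"
  proof -
    have "x 9 = ((2+2*w)*(x 6) + 2*(x 7) - 2*w*(x 8) + (-2-2*w)) / (2 * x 6)"
      using r[of 9] by simp
    also have "\<dots> = (1/1) * Pb9 w a b c / ((Pb4 w a b c) * (Pb5 w a b c) * (Pb6 w a b c))"
      unfolding e6 e7 e8 i9 using nza nzb nzc nzp4 nzp5 nzp6 nzp7 nzp8 by (simp add: field_simps)
    finally show ?thesis .
  qed
  have nzp9: "Pb9 w a b c \<noteq> 0" using e9 nz[of 9] by auto
  have i10: "Pb10 w a b c = ((1+w) * (1/1) * (Pb5 w a b c) * (Pb6 w a b c) * (Pb7 w a b c) + 1 * (1/1) * b * (Pb6 w a b c) * (Pb8 w a b c) + (-w) * (1/1) * b * c * (Pb9 w a b c) + (-1-w) * (1/1) * b * c * (Pb4 w a b c) * (Pb5 w a b c) * (Pb6 w a b c)) / (1)"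
    using Pb_id10[OF w, of a b c] nza nzb nzc nzp4 nzp5 nzp6 nzp7 nzp8 nzp9 w by (simp add: eq_divide_eq)
  have e10: "x 10 = (1/1) * Pb10 w a b c / ((Pb5 w a b c) * (Pb6 w a b c) * (Pb7 w a b c))"
  proof -
    have "x 10 = ((2+2*w)*(x 7) + 2*(x 8) - 2*w*(x 9) + (-2-2*w)) / (2 * x 7)"
      using r[of 10] by simp
    also have "\<dots> = (1/1) * Pb10 w a b c / ((Pb5 w a b c) * (Pb6 w a b c) * (Pb7 w a b c))"
      unfolding e7 e8 e9 i10 using nza nzb nzc nzp4 nzp5 nzp6 nzp7 nzp8 nzp9 by (simp add: field_simps)
    finally show ?thesis .
  qed
  have nzp10: "Pb10 w a b c \<noteq> 0" using e10 nz[of 10] by auto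
  have i11: "Pb11 w a b c = ((1+w) * (1/1) * (Pb6 w a b c) * (Pb7 w a b c) * (Pb8 w a b c) + 1 * (1/1) * c * (Pb7 w a b c) * (Pb9 w a b c) + (-w) * (1/1) * c * (Pb4 w a b c) * (Pb10 w a b c) + (-1-w) * (1/1) * c * (Pb4 w a b c) * (Pb5 w a b c) * (Pb6 w a b c) * (Pb7 w a b c)) / ((Pb8 w a b c))"
    using Pb_id11[OF w, of a b c] nza nzb nzc nzp4 nzp5 nzp6 nzp7 nzp8 nzp9 nzp10 w by (simp add: eq_divide_eq)
  have e11: "x 11 = (1/1) * Pb11 w a b c / ((Pb6 w a b c) * (Pb7 w a b c))"
  proof -
    have "x 11 = ((2+2*w)*(x 8) + 2*(x 9) - 2*w*(x 10) + (-2-2*w)) / (2 * x 8)"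
      using r[of 11] by simp
    also have "\<dots> = (1/1) * Pb11 w a b c / ((Pb6 w a b c) * (Pb7 w a b c))"
      unfolding e8 e9 e10 i11 using nza nzb nzc nzp4 nzp5 nzp6 nzp7 nzp8 nzp9 nzp10 by (simp add: field_simps)
    finally show ?thesis .
  qed
  have i12: "Pb12 w a b c = ((1+w) * (1/1) * (Pb7 w a b c) * (Pb9 w a b c) + 1 * (1/1) * (Pb4 w a b c) * (Pb10 w a b c) + (-w) * (1/1) * (Pb4 w a b c) * (Pb5 w a b c) * (Pb11 w a b c) + (-1-w) * (1/1) * (Pb4 w a b c) * (Pb5 w a b c) * (Pb6 w a b c) * (Pb7 w a b c)) / ((Pb9 w a b c))"
    using Pb_id12[OF w, of a b c] nza nzb nzc nzp4 nzp5 nzp6 nzp7 nzp8 nzp9 nzp10 w by (simp add: eq_divide_eq)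
  have e12: "x 12 = (1/1) * Pb12 w a b c / ((Pb7 w a b c))"
  proof -
    have "x 12 = ((2+2*w)*(x 9) + 2*(x 10) - 2*w*(x 11) + (-2-2*w)) / (2 * x 9)"
      using r[of 12] by simp
    also have "\<dots> = (1/1) * Pb12 w a b c / ((Pb7 w a b c))"
      unfolding e9 e10 e11 i12 using nza nzb nzc nzp4 nzp5 nzp6 nzp7 nzp8 nzp9 nzp10 by (simp add: field_simps)
    finally show ?thesis .
  qed
  have i13: "a = ((1+w) * (1/1) * (Pb10 w a b c) + 1 * (1/1) * (Pb5 w a b c) * (Pb11 w a b c) + (-w) * (1/1) * (Pb5 w a b c) * (Pb6 w a b c) * (Pb12 w a b c) + (-1-w) * (1/1) * (Pb5 w a b c) * (Pb6 w a b c) * (Pb7 w a b c)) / ((Pb10 w a b c))"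
    using Pb_id13[OF w, of a b c] nza nzb nzc nzp4 nzp5 nzp6 nzp7 nzp8 nzp9 nzp10 w by (simp add: eq_divide_eq)
  have e13: "x 13 = ((1+w) * (1/1) * (Pb10 w a b c) + 1 * (1/1) * (Pb5 w a b c) * (Pb11 w a b c) + (-w) * (1/1) * (Pb5 w a b c) * (Pb6 w a b c) * (Pb12 w a b c) + (-1-w) * (1/1) * (Pb5 w a b c) * (Pb6 w a b c) * (Pb7 w a b c)) / ((Pb10 w a b c))"
  proof -
    have "x 13 = ((2+2*w)*(x 10) + 2*(x 11) - 2*w*(x 12) + (-2-2*w)) / (2 * x 10)"
      using r[of 13] by simp
    also have "\<dots> = ((1+w) * (1/1) * (Pb10 w a b c) + 1 * (1/1) * (Pb5 w a b c) * (Pb11 w a b c) + (-w) * (1/1) * (Pb5 w a b c) * (Pb6 w a b c) * (Pb12 w a b c) + (-1-w) * (1/1) * (Pb5 w a b c) * (Pb6 w a b c) * (Pb7 w a b c)) / ((Pb10 w a b c))"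
      unfolding e10 e11 e12  using nza nzb nzc nzp4 nzp5 nzp6 nzp7 nzp8 nzp9 nzp10 by (simp add: field_simps)
    finally show ?thesis .
  qed
  show ?thesis using e13 i13 a_def by simp
qed

lemma shift_sol:
  assumes "rec3_solution N D z"
  shows "rec3_solution N D (\<lambda>m. z (m + k))"
  unfolding rec3_solution_def
proof (intro allI impI)
  fix m :: nat assume m: "4 \<le> m"
  have h: "D (z (m + k - 3)) (z (m + k - 2)) (z (m + k - 1)) \<noteq> 0 \<and>
        z (m + k) = N (z (m + k - 3)) (z (m + k - 2)) (z (m + k - 1)) / D (z (m + k - 3)) (z (m + k - 2)) (z (m + k - 1))"
    using assms m unfolding rec3_solution_def by auto
  have e: "m + k - 3 = m - 3 + k" "m + k - 2 = m - 2 + k" "m + k - 1 = m - 1 + k" using m by auto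
  show "D (z (m - 3 + k)) (z (m - 2 + k)) (z (m - 1 + k)) \<noteq> 0 \<and>
        z (m + k) = N (z (m - 3 + k)) (z (m - 2 + k)) (z (m - 1 + k)) / D (z (m - 3 + k)) (z (m - 2 + k)) (z (m - 1 + k))"
    using h unfolding e .
qed

lemma periodic_from:
  assumes ex: "rec3_solution N D z0"
  and P: "\<And>z. rec3_solution N D z \<Longrightarrow> z 13 = z 1"
  shows "rec3_periodic N D 12"
  unfolding rec3_periodic_def
proof (intro conjI allI impI)
  show "\<exists>z. rec3_solution N D z" using ex by blast
next
  fix z :: "nat \<Rightarrow> complex" and n :: nat
  assume s: "rec3_solution N D z" and n: "1 \<le> n"
  have "(\<lambda>m. z (m + (n - 1))) 13 = (\<lambda>m. z (m + (n - 1))) 1"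
    by (rule P[OF shift_sol[OF s]])
  then show "z (n + 12) = z n" using n by (simp add: add.commute)
qed

lemma const_sol:
  assumes "c \<noteq> 0" and "N c c c = 2 * c * c"
  shows "rec3_solution N (\<lambda>a b c. 2*a) (\<lambda>n. c)"
  unfolding rec3_solution_def using assms by simp

lemma per_w_periodic:
  fixes w :: complex
  assumes w: "w^2 + w + 1 = 0"
  shows "rec3_periodic (\<lambda>a b c. (2+2*w)*a + 2*b - 2*w*c + (-2-2*w)) (\<lambda>a b c. 2*a) 12"
proof (rule periodic_from)
  define s where "s = csqrt (- w)"
  have s2: "s * s = - w" unfolding s_def by (metis power2_csqrt power2_eq_square)
  have nz: "1 + s \<noteq> 0"
  proof
    assume "1 + s = 0"
    then have "s = -1" by (simp add: add_eq_0_iff)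
    then have "- w = 1" using s2 by simp
    then have "w = -1" by (metis minus_minus)
    then show False using w by simp
  qed
  show "rec3_solution (\<lambda>a b c. (2+2*w)*a + 2*b - 2*w*c + (-2-2*w)) (\<lambda>a b c. 2*a) (\<lambda>n. 1 + s)"
    by (rule const_sol[OF nz]) (use s2 in algebra)
next
  fix z assume "rec3_solution (\<lambda>a b c. (2+2*w)*a + 2*b - 2*w*c + (-2-2*w)) (\<lambda>a b c. 2*a) z"
  then show "z 13 = z 1" by (rule per_w[OF w])
qed

lemma per_a_periodic:
  shows "rec3_periodic (\<lambda>a b c. -1 - 2*a + 2*b - 2*c) (\<lambda>a b c. 2*a) 12"
proof (rule periodic_from)
  show "rec3_solution (\<lambda>a b c. -1 - 2*a + 2*b - 2*c) (\<lambda>a b c. 2*a) (\<lambda>n. (-1 + \<i>)/2)"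
    by (rule const_sol) (simp_all add: field_simps power2_eq_square complex_eq_iff)
next
  fix z assume "rec3_solution (\<lambda>a b c. -1 - 2*a + 2*b - 2*c) (\<lambda>a b c. 2*a) z"
  then show "z 13 = z 1" by (rule per_a)
qed

lemma per_w_periodic':
  fixes w al be ga :: complex
  assumes w: "w^2 + w + 1 = 0" and h: "al = 2+2*w" "be = -2*w" "ga = -2-2*w"
  shows "rec3_periodic (\<lambda>a b c. al*a + 2*b + be*c + ga) (\<lambda>a b c. 2*a) 12"
proof -
  have f: "(\<lambda>a b c. al*a + 2*b + be*c + ga) = (\<lambda>a b c. (2+2*w)*a + 2*b - 2*w*c + (-2-2*w))"
    unfolding h by (rule ext)+ (simp add: algebra_simps)
  show ?thesis unfolding f by (rule per_w_periodic[OF w])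
qed

theorem mainTheorem3:
  shows "rec3_periodic (\<lambda>a b c. -1 - 2*a + 2*b - 2*c) (\<lambda>a b c. 2*a) 12
       \<and> rec3_periodic
           (\<lambda>a b c. (1 + complex_of_real (sqrt 3) * \<i>) * a + 2*b
                   + (1 - complex_of_real (sqrt 3) * \<i>) * c + (-1 - complex_of_real (sqrt 3) * \<i>))
           (\<lambda>a b c. 2*a) 12
       \<and> rec3_periodic
           (\<lambda>a b c. (1 - complex_of_real (sqrt 3) * \<i>) * a + 2*b
                   + (1 + complex_of_real (sqrt 3) * \<i>) * c + (-1 + complex_of_real (sqrt 3) * \<i>))
           (\<lambda>a b c. 2*a) 12"
proof (intro conjI)
  show "rec3_periodic (\<lambda>a b c. -1 - 2*a + 2*b - 2*c) (\<lambda>a b c. 2*a) 12"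
    by (rule per_a_periodic)
next
  show "rec3_periodic
           (\<lambda>a b c. (1 + complex_of_real (sqrt 3) * \<i>) * a + 2*b
                   + (1 - complex_of_real (sqrt 3) * \<i>) * c + (-1 - complex_of_real (sqrt 3) * \<i>))
           (\<lambda>a b c. 2*a) 12"
    by (rule per_w_periodic'[where w = "(-1 + complex_of_real (sqrt 3) * \<i>) / 2"])
       (simp_all add: complex_eq_iff power2_eq_square)
next
  show "rec3_periodic
           (\<lambda>a b c. (1 - complex_of_real (sqrt 3) * \<i>) * a + 2*b
                   + (1 + complex_of_real (sqrt 3) * \<i>) * c + (-1 + complex_of_real (sqrt 3) * \<i>))
           (\<lambda>a b c. 2*a) 12"
    by (rule per_w_periodic'[where w = "(-1 - complex_of_real (sqrt 3) * \<i>) / 2"])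
       (simp_all add: complex_eq_iff power2_eq_square)
qed

end
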